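(* Let $p=0$, $0<q<1$, $0<\theta<1$, $\zeta\in(0,\theta)$, and $k<n$ positive integers. Define \[ m_{\mathrm{DD}}=\min_{\alpha,\beta,d}\max\left\{\frac{\theta}{1-\theta}\frac{1}{d\,D_{\mathrm{KL}}(\alpha\|q)},\ \frac{1}{d\,D_{\mathrm{KL}}\big(\alpha\|e^{-d}+(1-e^{-d})q\big)},\ \frac{\theta}{1-\theta}\frac{1}{d\,D_{\mathrm{KL}}(\beta\|(1-q)e^{-d})}\right\}k\log(n/k) \] and \[ m^{\mathrm{Ber}}_{\mathrm{DD}}=\min_{\alpha,\beta,d}\max\left\{\frac{\theta}{1-\theta}\frac{1}{k\,D_{\mathrm{KL}}(\tfrac{\alpha d}{k}\|\tfrac{qd}{k})},\ \frac{1-\zeta}{1-\theta}\frac{1}{k\,D_{\mathrm{KL}}\big(\tfrac{\alpha d}{k}\|\tfrac{(e^{-d}+(1-e^{-d})q)d}{k}\big)},\ \frac{\theta}{1-\theta}\frac{1}{k\,D_{\mathrm{KL}}\big(\tfrac{\beta d}{k}\|\tfrac{e^{-d}(1-q)d}{k}\big)}\right\}k\log(n/k), \] both minima over $d\in(0,\infty)$ (with $d<k$), $\alpha\in\big(q,\ e^{-d}+(1-e^{-d})q\big)$ and $\beta\in\big(0,e^{-d}(1-q)\big)$. Then $m^{\mathrm{Ber}}_{\mathrm{DD}}>m_{\mathrm{DD}}$.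
   Context: $\log$ is the natural logarithm; $D_{\mathrm{KL}}(r\|s)=r\log(r/s)+(1-r)\log\frac{1-r}{1-s}$. (These are the sufficient numbers of tests for noisy DD under the constant-column design and the Bernoulli design on the Z channel, i.e. false-positive probability $p=0$ and false-negative probability $q$; in the general bounds the fourth term, involving a Kullback–Leibler divergence to $0$, is infinite in the denominator and thus vanishes, and has been omitted.) *)

theory Defs
  imports Complex_Main
begin

definition DKL :: "real \<Rightarrow> real \<Rightarrow> real" where
  "DKL r s = r * ln (r / s) + (1 - r) * ln ((1 - r) / (1 - s))"

definition DD_domain :: "real \<Rightarrow> nat \<Rightarrow> (real \<times> real \<times> real) set" where
  "DD_domain q k = {(\<alpha>, \<beta>, d). 0 < d \<and> d < real k \<and>
      q < \<alpha> \<and> \<alpha> < exp (- d) + (1 - exp (- d)) * q \<and>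
      0 < \<beta> \<and> \<beta> < exp (- d) * (1 - q)}"

definition m_DD :: "real \<Rightarrow> real \<Rightarrow> nat \<Rightarrow> nat \<Rightarrow> real" where
  "m_DD q \<theta> k n =
    (INF (\<alpha>, \<beta>, d) \<in> DD_domain q k.
       max (\<theta> / (1 - \<theta>) * (1 / (d * DKL \<alpha> q)))
        (max (1 / (d * DKL \<alpha> (exp (- d) + (1 - exp (- d)) * q)))
             (\<theta> / (1 - \<theta>) * (1 / (d * DKL \<beta> ((1 - q) * exp (- d)))))))
    * real k * ln (real n / real k)"

definition m_DD_Ber :: "real \<Rightarrow> real \<Rightarrow> real \<Rightarrow> nat \<Rightarrow> nat \<Rightarrow> real" where
  "m_DD_Ber q \<theta> \<zeta> k n =
    (INF (\<alpha>, \<beta>, d) \<in> DD_domain q k.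
       max (\<theta> / (1 - \<theta>) * (1 / (real k * DKL (\<alpha> * d / real k) (q * d / real k))))
        (max ((1 - \<zeta>) / (1 - \<theta>) * (1 / (real k *
                 DKL (\<alpha> * d / real k) ((exp (- d) + (1 - exp (- d)) * q) * d / real k))))
             (\<theta> / (1 - \<theta>) * (1 / (real k *
                 DKL (\<beta> * d / real k) (exp (- d) * (1 - q) * d / real k))))))
    * real k * ln (real n / real k)"

end

theory Submission
  imports Defs "HOL-Analysis.Convex"
begin


lemma iden1:
  fixes A B a1 b1 :: real
  assumes "0 < A" "0 < B"
  shows "a1*(a1/A - b1/B) - (a1*b1*B - A*b1^2)/B^2 = (a1*B - b1*A)^2/(A*B^2)"
    using assms by (simp add: field_simps power2_eq_square)

lemma iden:
  fixes A B a1 b1 :: real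
  assumes "0 < A" "A < 1" "0 < B" "B < 1"
  shows "a1*(a1/A - b1/B + a1/(1-A) - b1/(1-B))
     - (a1*b1*B - A*b1^2)/B^2
     + ((1-A)*b1^2 - a1*b1*(1-B))/(1-B)^2
     = (a1*B - b1*A)^2/(A*B^2) + (a1*(1-B) - b1*(1-A))^2/((1-A)*(1-B)^2)"
proof -
  have "a1*(a1/(1-A) - b1/(1-B)) + ((1-A)*b1^2 - a1*b1*(1-B))/(1-B)^2 = (a1*(1-B) - b1*(1-A))^2/((1-A)*(1-B)^2)"
  proof -
    have e1: "(-a1)*((-a1)/(1-A) - (-b1)/(1-B)) - ((-a1)*(-b1)*(1-B) - (1-A)*(-b1)^2)/(1-B)^2
       = a1*(a1/(1-A) - b1/(1-B)) + ((1-A)*b1^2 - a1*b1*(1-B))/(1-B)^2"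
      using assms by (simp add: field_simps)
    have e2: "((-a1)*(1-B) - (-b1)*(1-A))^2 = (a1*(1-B) - b1*(1-A))^2"
      by (simp add: power2_eq_square algebra_simps)
    show ?thesis using iden1[of "1-A" "1-B" "-a1" "-b1"] assms e1 e2 by simp
  qed
  then show ?thesis using iden1[of A B a1 b1] assms by (simp add: algebra_simps)
qed

definition gD :: "real \<Rightarrow> real \<Rightarrow> real" where
 "gD A B = A * ln A - A * ln B + (1 - A) * ln (1 - A) - (1 - A) * ln (1 - B)"

definition gD1 where
 "gD1 a0 a1 b0 b1 s = a1 * (ln (a0+a1*s) - ln (b0+b1*s) - ln (1-(a0+a1*s)) + ln (1-(b0+b1*s)))
      - (a0+a1*s)*b1/(b0+b1*s) + (1-(a0+a1*s))*b1/(1-(b0+b1*s))"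

lemma gD_deriv:
  assumes "0 < a0 + a1*s" "a0 + a1*s < 1" "0 < b0 + b1*s" "b0 + b1*s < 1"
  shows "((\<lambda>s. gD (a0+a1*s) (b0+b1*s)) has_real_derivative gD1 a0 a1 b0 b1 s) (at s)"
  unfolding gD_def gD1_def using assms
  apply -
  apply (rule derivative_eq_intros refl | simp)+
  apply (simp add: field_simps)
  done

lemma gD_deriv2:
  assumes "0 < a0 + a1*s" "a0 + a1*s < 1" "0 < b0 + b1*s" "b0 + b1*s < 1"
  shows "(gD1 a0 a1 b0 b1 has_real_derivative
     (a1*(b0+b1*s) - b1*(a0+a1*s))^2/((a0+a1*s)*(b0+b1*s)^2)
   + (a1*(1-(b0+b1*s)) - b1*(1-(a0+a1*s)))^2/((1-(a0+a1*s))*(1-(b0+b1*s))^2)) (at s)"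
proof -
  obtain A B where A: "A = a0+a1*s" and B: "B = b0+b1*s" by blast
  have pos: "0 < A" "A < 1" "0 < B" "B < 1" using assms A B by auto
  have i: "a1*(a1/A - b1/B + a1/(1-A) - b1/(1-B))
     - (a1*b1*B - A*b1^2)/B^2
     + ((1-A)*b1^2 - a1*b1*(1-B))/(1-B)^2
     = (a1*B - b1*A)^2/(A*B^2) + (a1*(1-B) - b1*(1-A))^2/((1-A)*(1-B)^2)"
    using iden[OF pos] .
  have n: "A \<noteq> 0" "B \<noteq> 0" "1 - A \<noteq> 0" "1 - B \<noteq> 0" using pos by auto
  show ?thesis
    unfolding gD1_def[abs_def] using assms
    apply -
    apply (rule derivative_eq_intros refl | (simp; fail))+
    apply (simp only: A[symmetric] B[symmetric])
    using i n apply (simp add: field_simps power2_eq_square)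
    done
qed

definition phiF :: "real \<Rightarrow> real \<Rightarrow> real \<Rightarrow> real" where
 "phiF a b x = a*x*ln(a/b) + (1-a*x)*(ln(1-a*x) - ln(1-b*x))"
definition phiF1 where
 "phiF1 a b x = a*ln(a/b) - a*(ln(1-a*x) - ln(1-b*x)) - a + b*(1-a*x)/(1-b*x)"

lemma phiF_deriv:
  assumes "a*x < 1" "b*x < 1"
  shows "(phiF a b has_real_derivative phiF1 a b x) (at x)"
proof -
  have n: "1 - a*x \<noteq> 0" "1 - b*x \<noteq> 0" "(1-a*x)*(1-b*x) \<noteq> 0" using assms by auto
  show ?thesis
  unfolding phiF_def[abs_def] phiF1_def using assms
  apply -
  apply (rule derivative_eq_intros refl | (simp; fail))+
  using n apply (simp add: field_simps)
  done
qed

lemma phiF_deriv2: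
  assumes "a*x < 1" "b*x < 1"
  shows "(phiF1 a b has_real_derivative (a-b)^2/((1-a*x)*(1-b*x)^2)) (at x)"
proof -
  obtain A B where A: "A = 1 - a*x" and B: "B = 1 - b*x" by blast
  have pos: "0 < A" "0 < B" using assms A B by auto
  have rel: "(-a)*B - (-b)*A = -(a-b)" by (simp add: A B algebra_simps)
  have sq: "((-a)*B - (-b)*A)^2 = (a-b)^2" using rel by (metis minus_diff_eq power2_minus)
  have i: "(-a)*((-a)/A - (-b)/B) - ((-a)*(-b)*B - A*(-b)^2)/B^2 = (a-b)^2/(A*B^2)"
    using iden1[OF pos, of "-a" "-b"] unfolding sq .
  show ?thesis
  unfolding phiF1_def[abs_def] using assms
  apply -
  apply (rule derivative_eq_intros refl | (simp; fail))+
  apply (simp only: A[symmetric] B[symmetric])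
  using i pos apply (simp add: field_simps power2_eq_square)
  done
qed

lemma strong_convex:
  fixes f f' f'' :: "real \<Rightarrow> real"
  assumes "convex C"
    and "\<And>x. x \<in> C \<Longrightarrow> (f has_real_derivative f' x) (at x)"
    and "\<And>x. x \<in> C \<Longrightarrow> (f' has_real_derivative f'' x) (at x)"
    and "\<And>x. x \<in> C \<Longrightarrow> m \<le> f'' x"
  shows "convex_on C (\<lambda>x. f x - m/2 * x^2)"
proof (rule f''_ge0_imp_convex[where f'="\<lambda>x. f' x - m*x" and f''="\<lambda>x. f'' x - m"])
  show "convex C" by fact
  fix x assume x: "x \<in> C"
  show "((\<lambda>x. f x - m/2 * x^2) has_real_derivative f' x - m*x) (at x)"
    using assms(2)[OF x] by (auto intro!: derivative_eq_intros)
  show "((\<lambda>x. f' x - m*x) has_real_derivative f'' x - m) (at x)"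
    using assms(3)[OF x] by (auto intro!: derivative_eq_intros)
  show "0 \<le> f'' x - m" using assms(4)[OF x] by simp
qed

lemma scale_ineq:
  fixes f :: "real \<Rightarrow> real"
  assumes cv: "convex_on {0..T} (\<lambda>x. f x - m/2 * x^2)" and f0: "f 0 = 0"
    and t: "0 \<le> t" and c: "1 \<le> c" and ct: "c*t \<le> T"
  shows "c * f t + m*c*(c-1)*t^2/2 \<le> f (c*t)"
proof -
  let ?H = "\<lambda>x. f x - m/2 * x^2"
  have T0: "0 \<le> c*t" using t c by simp
  have "?H ((1 - 1/c) *\<^sub>R 0 + (1/c) *\<^sub>R (c*t)) \<le> (1 - 1/c) * ?H 0 + (1/c) * ?H (c*t)"
    using c t ct T0 by (intro convex_onD[OF cv]) (auto intro: order_trans[OF T0 ct])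
  moreover have "(1 - 1/c) *\<^sub>R 0 + (1/c) *\<^sub>R (c*t) = t" using c by simp
  ultimately have "f t - m/2*t^2 \<le> (1/c) * (f (c*t) - m/2*(c*t)^2)" using f0 by simp
  then have "c*(f t - m/2*t^2) \<le> f (c*t) - m/2*(c*t)^2"
    using c by (simp add: field_simps)
  moreover have "c * f t + m*c*(c-1)*t^2/2 = c*(f t - m/2*t^2) + m/2*(c*t)^2"
    by (simp add: field_simps power2_eq_square)
  ultimately show ?thesis by linarith
qed

lemma chord_ineq:
  fixes f :: "real \<Rightarrow> real"
  assumes cv: "convex_on {0..1} (\<lambda>x. f x - m/2 * x^2)" and f0: "f 0 = 0"
    and x: "0 \<le> x" "x \<le> 1"
  shows "f x \<le> x * f 1 - m*x*(1-x)/2"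
proof -
  let ?H = "\<lambda>x. f x - m/2 * x^2"
  have "?H ((1 - x) *\<^sub>R 0 + x *\<^sub>R 1) \<le> (1 - x) * ?H 0 + x * ?H 1"
    using x by (intro convex_onD[OF cv]) auto
  then have "f x - m/2*x^2 \<le> x * (f 1 - m/2)" using f0 by simp
  then show ?thesis by (simp add: algebra_simps power2_eq_square divide_simps)
qed



lemma ln_less_minus_one: fixes x :: real assumes "0 < x" "x \<noteq> 1" shows "ln x < x - 1"
proof -
  have sx: "0 < sqrt x" "sqrt x \<noteq> 1" using assms by auto
  have "ln x = 2 * ln (sqrt x)" using assms by (simp add: ln_sqrt)
  also have "\<dots> \<le> 2 * (sqrt x - 1)" using ln_le_minus_one[OF sx(1)] by simp
  also have "\<dots> < x - 1"
  proof -
    have "0 < (sqrt x - 1)^2" using sx by simp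
    moreover have "(sqrt x - 1)^2 = x - 2*sqrt x + 1" using assms by (simp add: power2_eq_square algebra_simps)
    ultimately show ?thesis by simp
  qed
  finally show ?thesis .
qed

lemma DKL_gD: assumes "0 < A" "A < 1" "0 < B" "B < 1" shows "DKL A B = gD A B"
  using assms unfolding DKL_def gD_def by (simp add: ln_div algebra_simps)

lemma DKL_phiF: assumes "0 < a" "0 < b" "0 < x" "a*x < 1" "b*x < 1"
  shows "DKL (a*x) (b*x) = phiF a b x"
proof -
  have "(a*x)/(b*x) = a/b" using assms by simp
  moreover have "ln ((1-a*x)/(1-b*x)) = ln (1-a*x) - ln (1-b*x)" using assms by (simp add: ln_div)
  ultimately show ?thesis unfolding DKL_def phiF_def by (simp only:)
qed

lemma phiF_0: "phiF a b 0 = 0" by (simp add: phiF_def)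

lemma phiF_1: assumes "0 < a" "0 < b" "a < 1" "b < 1" shows "phiF a b 1 = DKL a b"
  using DKL_phiF[of a b 1] assms by simp

lemma chi2: assumes "0 < a" "a < 1" "0 < b" "b < 1"
  shows "DKL a b \<le> (a-b)^2/(b*(1-b))"
proof -
  have "ln (a/b) \<le> a/b - 1" using assms by (intro ln_le_minus_one) simp
  then have 1: "a * ln (a/b) \<le> a * (a/b - 1)" using assms by (intro mult_left_mono) auto
  have "ln ((1-a)/(1-b)) \<le> (1-a)/(1-b) - 1" using assms by (intro ln_le_minus_one) simp
  then have 2: "(1-a) * ln ((1-a)/(1-b)) \<le> (1-a) * ((1-a)/(1-b) - 1)" using assms by (intro mult_left_mono) auto
  have 3: "a * (a/b - 1) + (1-a) * ((1-a)/(1-b) - 1) = (a-b)^2/(b*(1-b))"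
    using assms by (simp add: field_simps power2_eq_square)
  show ?thesis using 1 2 3 unfolding DKL_def by linarith
qed

lemma DKL_pos: assumes "0 < a" "a < 1" "0 < b" "b < 1" "a \<noteq> b"
  shows "0 < DKL a b"
proof -
  have "ln (b/a) < b/a - 1" using assms by (intro ln_less_minus_one) auto
  then have 1: "a * ln (b/a) < a * (b/a - 1)" using assms by (intro mult_strict_left_mono) auto
  have "ln ((1-b)/(1-a)) \<le> (1-b)/(1-a) - 1" using assms by (intro ln_le_minus_one) simp
  then have 2: "(1-a) * ln ((1-b)/(1-a)) \<le> (1-a) * ((1-b)/(1-a) - 1)" using assms by (intro mult_left_mono) auto
  have 3: "a * (b/a - 1) + (1-a) * ((1-b)/(1-a) - 1) = 0"
    using assms by (simp add: field_simps)
  have 4: "ln (b/a) = - ln (a/b)" "ln ((1-b)/(1-a)) = - ln ((1-a)/(1-b))"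
    using assms by (simp_all add: ln_div)
  show ?thesis using 1 2 3 4 unfolding DKL_def by simp
qed



lemma gD_convex:
  assumes dom: "\<And>s. s \<in> {0..T} \<Longrightarrow> 0 < a0+a1*s \<and> a0+a1*s < 1 \<and> 0 < b0+b1*s \<and> b0+b1*s < 1"
    and lb: "\<And>s. s \<in> {0..T} \<Longrightarrow> m \<le> (a1*(b0+b1*s) - b1*(a0+a1*s))^2/((a0+a1*s)*(b0+b1*s)^2)
   + (a1*(1-(b0+b1*s)) - b1*(1-(a0+a1*s)))^2/((1-(a0+a1*s))*(1-(b0+b1*s))^2)"
  shows "convex_on {0..T} (\<lambda>s. gD (a0+a1*s) (b0+b1*s) - m/2*s^2)"
  using strong_convex[of "{0..T}" "\<lambda>s. gD (a0+a1*s) (b0+b1*s)" "gD1 a0 a1 b0 b1"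
     "\<lambda>s. (a1*(b0+b1*s) - b1*(a0+a1*s))^2/((a0+a1*s)*(b0+b1*s)^2)
   + (a1*(1-(b0+b1*s)) - b1*(1-(a0+a1*s)))^2/((1-(a0+a1*s))*(1-(b0+b1*s))^2)" m]
  using dom lb gD_deriv gD_deriv2 by auto

lemma phiF_convex:
  assumes dom: "\<And>s. s \<in> {0..T} \<Longrightarrow> a*s < 1 \<and> b*s < 1"
    and lb: "\<And>s. s \<in> {0..T} \<Longrightarrow> m \<le> (a-b)^2/((1-a*s)*(1-b*s)^2)"
  shows "convex_on {0..T} (\<lambda>s. phiF a b s - m/2*s^2)"
  using strong_convex[of "{0..T}" "phiF a b" "phiF1 a b" "\<lambda>s. (a-b)^2/((1-a*s)*(1-b*s)^2)" m]
  using dom lb phiF_deriv phiF_deriv2 by auto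

lemma F1_scale:
  fixes q g t c :: real
  assumes q: "0 < q" "q < 1" and g: "0 < g" "g < 1" and t: "0 < t" and c: "1 \<le> c"
    and ct: "q + c*t < 1"
  shows "c * DKL (q+g*t) q * (1 + (c-1)*(q*(1-q))) \<le> DKL (q+g*(c*t)) q"
proof -
  define f where "f = (\<lambda>s. gD (q+g*s) (q+0*s))"
  have dom: "0 < q+g*s \<and> q+g*s < 1 \<and> 0 < q+0*s \<and> q+0*s < 1" if "s \<in> {0..c*t}" for s
  proof -
    have "g*s \<le> s" using that g by (simp add: mult_left_le_one_le)
    then show ?thesis using that q g ct by (auto intro: add_pos_nonneg)
  qed
  have lb: "2*g^2 \<le> (g*(q+0*s) - 0*(q+g*s))^2/((q+g*s)*(q+0*s)^2)
   + (g*(1-(q+0*s)) - 0*(1-(q+g*s)))^2/((1-(q+g*s))*(1-(q+0*s))^2)" if "s \<in> {0..c*t}" for s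
  proof -
    have A: "0 < q+g*s" "q+g*s < 1" using dom[OF that] by auto
    have e1: "(g*(q+0*s) - 0*(q+g*s))^2/((q+g*s)*(q+0*s)^2) = g^2/(q+g*s)"
      using q A by (simp add: power_mult_distrib)
    have e2: "(g*(1-(q+0*s)) - 0*(1-(q+g*s)))^2/((1-(q+g*s))*(1-(q+0*s))^2) = g^2/(1-(q+g*s))"
      using q A by (simp add: power_mult_distrib)
    have "g^2 * (q+g*s) \<le> g^2" using A by (simp add: mult_left_le)
    then have "g^2 \<le> g^2/(q+g*s)" using A by (simp add: le_divide_eq)
    moreover have "g^2 * (1-(q+g*s)) \<le> g^2" using A by (simp add: mult_left_le)
    then have "g^2 \<le> g^2/(1-(q+g*s))" using A by (simp add: le_divide_eq)
    ultimately show ?thesis unfolding e1 e2 by simp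
  qed
  have cv: "convex_on {0..c*t} (\<lambda>s. f s - (2*g^2)/2*s^2)"
    unfolding f_def by (rule gD_convex) (use dom lb in auto)
  have f0: "f 0 = 0" unfolding f_def gD_def by simp
  have sc: "c * f t + (2*g^2)*c*(c-1)*t^2/2 \<le> f (c*t)"
    by (rule scale_ineq[OF cv f0]) (use t c in auto)
  have tin: "t \<in> {0..c*t}" "c*t \<in> {0..c*t}" using t c by (auto simp: mult_le_cancel_right1)
  have ft: "f t = DKL (q+g*t) q" unfolding f_def using dom[OF tin(1)] by (simp add: DKL_gD)
  have fct: "f (c*t) = DKL (q+g*(c*t)) q" unfolding f_def using dom[OF tin(2)] by (simp add: DKL_gD)
  have chi: "DKL (q+g*t) q \<le> (g*t)^2/(q*(1-q))"
    using chi2[of "q+g*t" q] dom[OF tin(1)] q by simp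
  then have "q*(1-q) * DKL (q+g*t) q \<le> (g*t)^2" using q by (simp add: field_simps)
  then have "c*(c-1) * (q*(1-q) * DKL (q+g*t) q) \<le> c*(c-1) * (g*t)^2"
    using c by (intro mult_left_mono) auto
  moreover have "c * f t + (2*g^2)*c*(c-1)*t^2/2 = c * DKL (q+g*t) q + c*(c-1) * (g*t)^2"
    by (simp add: power_mult_distrib ft)
  moreover have "c * DKL (q+g*t) q * (1 + (c-1)*(q*(1-q))) = c * DKL (q+g*t) q + c*(c-1) * (q*(1-q) * DKL (q+g*t) q)"
    by (simp add: algebra_simps)
  ultimately show ?thesis using sc fct ft by linarith
qed


lemma le_div_le1: fixes x D :: real assumes "0 \<le> x" "0 < D" "D \<le> 1" shows "x \<le> x / D"
proof -
  have "x * D \<le> x" using assms by (simp add: mult_left_le)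
  then show ?thesis using assms by (simp add: le_divide_eq)
qed

lemma F2_scale:
  fixes q g t c w :: real
  assumes q: "0 < q" "q < 1" and g: "0 < g" "g < 1" and t: "0 < t" and c: "1 \<le> c"
    and ct: "q + c*t < 1" and w: "0 < w" "w \<le> (q+t)*(1-(q+t))"
  shows "c * DKL (q+g*t) (q+t) * (1 + (c-1)*(q^2*w/2)) \<le> DKL (q+g*(c*t)) (q+c*t)"
proof -
  define f where "f = (\<lambda>s. gD (q+g*s) (q+1*s))"
  have dom: "0 < q+g*s \<and> q+g*s < 1 \<and> 0 < q+1*s \<and> q+1*s < 1" if "s \<in> {0..c*t}" for s
  proof -
    have "g*s \<le> s" using that g by (simp add: mult_left_le_one_le)
    then show ?thesis using that q g ct by (auto intro: add_pos_nonneg)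
  qed
  have lb: "(1-g)^2*q^2 \<le> (g*(q+1*s) - 1*(q+g*s))^2/((q+g*s)*(q+1*s)^2)
   + (g*(1-(q+1*s)) - 1*(1-(q+g*s)))^2/((1-(q+g*s))*(1-(q+1*s))^2)" if "s \<in> {0..c*t}" for s
  proof -
    have A: "0 < q+g*s" "q+g*s < 1" "0 < q+1*s" "q+1*s < 1" using dom[OF that] by auto
    have e1: "(g*(q+1*s) - 1*(q+g*s))^2 = (1-g)^2*q^2"
      by (simp add: power2_eq_square algebra_simps)
    have D: "0 < (q+g*s)*(q+1*s)^2" "(q+g*s)*(q+1*s)^2 \<le> 1"
      using A by (auto intro!: mult_le_one simp: power_le_one)
    have "(1-g)^2*q^2 \<le> (1-g)^2*q^2 / ((q+g*s)*(q+1*s)^2)"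
      using D by (intro le_div_le1) auto
    moreover have "0 \<le> (g*(1-(q+1*s)) - 1*(1-(q+g*s)))^2/((1-(q+g*s))*(1-(q+1*s))^2)"
      using A by (intro divide_nonneg_pos) auto
    ultimately show ?thesis unfolding e1 by linarith
  qed
  have cv: "convex_on {0..c*t} (\<lambda>s. f s - ((1-g)^2*q^2)/2*s^2)"
    unfolding f_def by (rule gD_convex) (use dom lb in auto)
  have f0: "f 0 = 0" unfolding f_def gD_def by simp
  have sc: "c * f t + ((1-g)^2*q^2)*c*(c-1)*t^2/2 \<le> f (c*t)"
    by (rule scale_ineq[OF cv f0]) (use t c in auto)
  have tin: "t \<in> {0..c*t}" "c*t \<in> {0..c*t}" using t c by (auto simp: mult_le_cancel_right1)
  have ft: "f t = DKL (q+g*t) (q+t)" unfolding f_def using dom[OF tin(1)] by (simp add: DKL_gD)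
  have fct: "f (c*t) = DKL (q+g*(c*t)) (q+c*t)" unfolding f_def using dom[OF tin(2)] by (simp add: DKL_gD)
  have chi: "DKL (q+g*t) (q+t) \<le> ((q+g*t)-(q+t))^2/((q+t)*(1-(q+t)))"
    using chi2[of "q+g*t" "q+t"] dom[OF tin(1)] by simp
  also have "\<dots> \<le> ((q+g*t)-(q+t))^2/w"
    using w dom[OF tin(1)] by (intro divide_left_mono) auto
  finally have "w * DKL (q+g*t) (q+t) \<le> ((q+g*t)-(q+t))^2" using w by (simp add: field_simps)
  also have "((q+g*t)-(q+t))^2 = (1-g)^2*t^2" by (simp add: power2_eq_square algebra_simps)
  finally have "c*(c-1)*(q^2/2) * (w * DKL (q+g*t) (q+t)) \<le> c*(c-1)*(q^2/2) * ((1-g)^2*t^2)"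
    using c by (intro mult_left_mono) auto
  moreover have "c * f t + ((1-g)^2*q^2)*c*(c-1)*t^2/2 = c * DKL (q+g*t) (q+t) + c*(c-1)*(q^2/2) * ((1-g)^2*t^2)"
    by (simp add: ft)
  moreover have "c * DKL (q+g*t) (q+t) * (1 + (c-1)*(q^2*w/2)) = c * DKL (q+g*t) (q+t) + c*(c-1)*(q^2/2) * (w * DKL (q+g*t) (q+t))"
    by (simp add: algebra_simps)
  ultimately show ?thesis using sc fct by linarith
qed


lemma F3_scale:
  fixes e t c w :: real
  assumes e: "0 < e" "e < 1" and t: "0 < t" and c: "1 \<le> c"
    and ct: "c*t < 1" and w: "0 < w" "w \<le> t*(1-t)"
  shows "c * DKL (e*t) t * (1 + (c-1)*(w/2)) \<le> DKL (e*(c*t)) (c*t)"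
proof -
  define f where "f = phiF e 1"
  have dom: "e*s < 1 \<and> 1*s < 1 \<and> 0 \<le> s" if "s \<in> {0..c*t}" for s
  proof -
    have "e*s \<le> s" using that e by (simp add: mult_left_le_one_le)
    then show ?thesis using that ct by auto
  qed
  have lb: "(e-1)^2 \<le> (e-1)^2/((1-e*s)*(1-1*s)^2)" if "s \<in> {0..c*t}" for s
  proof -
    have A: "e*s < 1" "1*s < 1" "0 \<le> s" using dom[OF that] by auto
    have p1: "0 < 1-e*s" "0 < 1-1*s" using A by auto
    have "0 \<le> e*s" using e A by simp
    then have h1: "1-e*s \<le> 1" by simp
    have h2: "(1-1*s)^2 \<le> 1" using p1 A by (intro power_le_one) auto
    have "0 < (1-e*s)*(1-1*s)^2" using p1 by simp
    moreover have "(1-e*s)*(1-1*s)^2 \<le> 1"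
      using h1 h2 p1 by (intro mult_le_one) auto
    ultimately show ?thesis by (intro le_div_le1) auto
  qed
  have cv: "convex_on {0..c*t} (\<lambda>s. f s - ((e-1)^2)/2*s^2)"
    unfolding f_def
  proof (rule phiF_convex)
    fix s assume "s \<in> {0..c*t}"
    then show "e*s < 1 \<and> 1*s < 1" using dom by blast
  next
    fix s assume "s \<in> {0..c*t}"
    then show "(e-1)^2 \<le> (e-1)^2/((1-e*s)*(1-1*s)^2)" using lb by blast
  qed
  have f0: "f 0 = 0" unfolding f_def by (simp add: phiF_0)
  have sc: "c * f t + ((e-1)^2)*c*(c-1)*t^2/2 \<le> f (c*t)"
    by (rule scale_ineq[OF cv f0]) (use t c in auto)
  have tin: "t \<in> {0..c*t}" "c*t \<in> {0..c*t}" using t c by (auto simp: mult_le_cancel_right1)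
  have t1': "1*t < 1" "e*t < 1" using dom[OF tin(1)] by auto
  have ft: "f t = DKL (e*t) t" unfolding f_def using DKL_phiF[of e 1 t, OF e(1) _ t t1'(2) t1'(1)] by simp
  have ct0: "0 < c*t" using c t by simp
  have t2': "1*(c*t) < 1" "e*(c*t) < 1" using dom[OF tin(2)] by auto
  have fct: "f (c*t) = DKL (e*(c*t)) (c*t)" unfolding f_def using DKL_phiF[of e 1 "c*t", OF e(1) _ ct0 t2'(2) t2'(1)] by simp
  have t1: "t < 1" using dom[OF tin(1)] by simp
  have et: "0 < e*t" "e*t < 1" using e t t1'(2) by auto
  have chi: "DKL (e*t) t \<le> (e*t-t)^2/(t*(1-t))"
    using chi2[of "e*t" t] et t t1 by simp
  also have "\<dots> \<le> (e*t-t)^2/w"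
    using w t t1 by (intro divide_left_mono) auto
  finally have "w * DKL (e*t) t \<le> (e*t-t)^2" using w by (simp add: field_simps)
  also have "(e*t-t)^2 = (e-1)^2*t^2" by (simp add: power2_eq_square algebra_simps)
  finally have "c*(c-1)/2 * (w * DKL (e*t) t) \<le> c*(c-1)/2 * ((e-1)^2*t^2)"
    using c by (intro mult_left_mono) auto
  moreover have "c * f t + ((e-1)^2)*c*(c-1)*t^2/2 = c * DKL (e*t) t + c*(c-1)/2 * ((e-1)^2*t^2)"
    by (simp add: ft)
  moreover have "c * DKL (e*t) t * (1 + (c-1)*(w/2)) = c * DKL (e*t) t + c*(c-1)/2 * (w * DKL (e*t) t)"
    by (simp add: algebra_simps)
  ultimately show ?thesis using sc fct by linarith
qed


lemma chord_DKL:
  fixes a b x :: real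
  assumes a: "0 < a" "a < 1" and b: "0 < b" "b < 1" and x: "0 < x" "x \<le> 1"
  shows "DKL (a*x) (b*x) \<le> x * DKL a b * (1 - b*(1-b)*(1-x)/2)"
proof -
  define f where "f = phiF a b"
  have dom: "a*s < 1 \<and> b*s < 1 \<and> 0 \<le> s" if "s \<in> {0..1}" for s
  proof -
    have "a*s \<le> a" "b*s \<le> b" using that a b by (auto intro!: mult_left_le)
    moreover have "0 \<le> s" using that by simp
    ultimately show ?thesis using a b by (intro conjI; linarith)
  qed
  have lb: "(a-b)^2 \<le> (a-b)^2/((1-a*s)*(1-b*s)^2)" if "s \<in> {0..1}" for s
  proof -
    have A: "a*s < 1" "b*s < 1" "0 \<le> s" using dom[OF that] by auto
    have p1: "0 < 1-a*s" "0 < 1-b*s" using A by auto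
    have "0 \<le> a*s" "0 \<le> b*s" using a b A by auto
    then have h1: "1-a*s \<le> 1" "1-b*s \<le> 1" by auto
    have h2: "(1-b*s)^2 \<le> 1" using p1 h1 by (intro power_le_one) auto
    have "0 < (1-a*s)*(1-b*s)^2" using p1 by simp
    moreover have "(1-a*s)*(1-b*s)^2 \<le> 1"
      using h1 h2 p1 by (intro mult_le_one) auto
    ultimately show ?thesis by (intro le_div_le1) auto
  qed
  have cv: "convex_on {0..1} (\<lambda>s. f s - ((a-b)^2)/2*s^2)"
    unfolding f_def
  proof (rule phiF_convex)
    fix s :: real assume "s \<in> {0..1}"
    then show "a*s < 1 \<and> b*s < 1" using dom by blast
  next
    fix s :: real assume "s \<in> {0..1}"
    then show "(a-b)^2 \<le> (a-b)^2/((1-a*s)*(1-b*s)^2)" using lb by blast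
  qed
  have f0: "f 0 = 0" unfolding f_def by (simp add: phiF_0)
  have ch: "f x \<le> x * f 1 - (a-b)^2*x*(1-x)/2"
    by (rule chord_ineq[OF cv f0]) (use x in auto)
  have f1: "f 1 = DKL a b" unfolding f_def using phiF_1 a b by simp
  have xin: "x \<in> {0..1}" using x by auto
  have fx: "f x = DKL (a*x) (b*x)" unfolding f_def using DKL_phiF[of a b x] dom[OF xin] a b x by simp
  have "DKL a b \<le> (a-b)^2/(b*(1-b))" using chi2 a b by simp
  then have "b*(1-b) * DKL a b \<le> (a-b)^2" using b by (simp add: field_simps)
  then have "x*(1-x)/2 * (b*(1-b) * DKL a b) \<le> x*(1-x)/2 * (a-b)^2"
    using x by (intro mult_left_mono) auto
  moreover have "x * DKL a b * (1 - b*(1-b)*(1-x)/2) = x * DKL a b - x*(1-x)/2 * (b*(1-b) * DKL a b)"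
    by (simp add: field_simps)
  moreover have "(a-b)^2*x*(1-x)/2 = x*(1-x)/2 * (a-b)^2" by simp
  moreover have "DKL (a*x) (b*x) \<le> x * DKL a b - (a-b)^2*x*(1-x)/2" using ch f1 fx by simp
  ultimately show ?thesis by linarith
qed


definition CCobj :: "real \<Rightarrow> real \<Rightarrow> real \<times> real \<times> real \<Rightarrow> real" where
  "CCobj q \<theta> = (\<lambda>(\<alpha>, \<beta>, d).
       max (\<theta> / (1 - \<theta>) * (1 / (d * DKL \<alpha> q)))
        (max (1 / (d * DKL \<alpha> (exp (- d) + (1 - exp (- d)) * q)))
             (\<theta> / (1 - \<theta>) * (1 / (d * DKL \<beta> ((1 - q) * exp (- d)))))))"

definition Bobj :: "real \<Rightarrow> real \<Rightarrow> real \<Rightarrow> nat \<Rightarrow> real \<times> real \<times> real \<Rightarrow> real" where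
  "Bobj q \<theta> \<zeta> k = (\<lambda>(\<alpha>, \<beta>, d).
       max (\<theta> / (1 - \<theta>) * (1 / (real k * DKL (\<alpha> * d / real k) (q * d / real k))))
        (max ((1 - \<zeta>) / (1 - \<theta>) * (1 / (real k *
                 DKL (\<alpha> * d / real k) ((exp (- d) + (1 - exp (- d)) * q) * d / real k))))
             (\<theta> / (1 - \<theta>) * (1 / (real k *
                 DKL (\<beta> * d / real k) (exp (- d) * (1 - q) * d / real k))))))"

lemma m_DD_eq: "m_DD q \<theta> k n = (INF p \<in> DD_domain q k. CCobj q \<theta> p) * real k * ln (real n / real k)"
  unfolding m_DD_def CCobj_def by (rule refl)

lemma m_DD_Ber_eq: "m_DD_Ber q \<theta> \<zeta> k n = (INF p \<in> DD_domain q k. Bobj q \<theta> \<zeta> k p) * real k * ln (real n / real k)"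
  unfolding m_DD_Ber_def Bobj_def by (rule refl)

lemma dom_facts:
  assumes "(\<alpha>, \<beta>, d) \<in> DD_domain q k" "0 < q" "q < 1"
  shows "0 < d" "d < real k" "0 < (1-q)*exp(-d)" "(1-q)*exp(-d) < 1 - q"
    "q < \<alpha>" "\<alpha> < q + (1-q)*exp(-d)" "0 < \<beta>" "\<beta> < (1-q)*exp(-d)"
    "exp (- d) + (1 - exp (- d)) * q = q + (1-q)*exp(-d)"
    "exp (- d) * (1 - q) = (1-q)*exp(-d)"
proof -
  have h: "0 < d" "d < real k" "q < \<alpha>" "\<alpha> < exp (- d) + (1 - exp (- d)) * q"
     "0 < \<beta>" "\<beta> < exp (- d) * (1 - q)" using assms(1) unfolding DD_domain_def by auto
  have e: "exp (- d) + (1 - exp (- d)) * q = q + (1-q)*exp(-d)" by (simp add: algebra_simps)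
  have "exp (-d) < 1" using h(1) by simp
  then have "(1-q)*exp(-d) < (1-q)*1" using assms by (intro mult_strict_left_mono) auto
  then show "(1-q)*exp(-d) < 1 - q" by simp
  show "0 < (1-q)*exp(-d)" using assms by simp
  show "exp (- d) + (1 - exp (- d)) * q = q + (1-q)*exp(-d)" by (fact e)
  show "exp (- d) * (1 - q) = (1-q)*exp(-d)" by simp
  show "0 < d" "d < real k" "q < \<alpha>" "0 < \<beta>" using h by auto
  show "\<alpha> < q + (1-q)*exp(-d)" using h e by simp
  show "\<beta> < (1-q)*exp(-d)" using h by (simp add: mult.commute)
qed

lemma recip_le:
  fixes X Y r C :: real
  assumes "0 < Y" "Y \<le> X * r" "0 < X" "0 < r" "0 \<le> C"
  shows "C*(1/X) \<le> r*(C*(1/Y))"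
proof -
  have "C / (X*r) \<le> C / Y" using assms by (intro divide_left_mono) auto
  then have "r * (C / (X*r)) \<le> r * (C / Y)" using assms by (intro mult_left_mono) auto
  moreover have "C*(1/X) = r * (C / (X*r))" using assms by (simp add: field_simps)
  ultimately show ?thesis by simp
qed

lemma recip_ge:
  fixes X Y l C :: real
  assumes "0 < X" "l*X \<le> Y" "0 < l" "0 \<le> C"
  shows "l*(C*(1/Y)) \<le> C*(1/X)"
proof -
  have lX: "0 < l*X" using assms by simp
  then have Y: "0 < Y" using assms by linarith
  have "C / Y \<le> C / (l*X)" using assms lX Y by (intro divide_left_mono) auto
  then have "l * (C / Y) \<le> l * (C / (l*X))" using assms by (intro mult_left_mono) auto
  moreover have "C*(1/X) = l * (C / (l*X))" using assms by (simp add: field_simps)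
  ultimately show ?thesis by simp
qed

lemma max3_scale:
  fixes l a1 a2 a3 b1 b2 b3 :: real
  assumes "0 \<le> l" "l*b1 \<le> a1" "l*b2 \<le> a2" "l*b3 \<le> a3"
  shows "l * max b1 (max b2 b3) \<le> max a1 (max a2 a3)"
  using assms by (auto simp: max_def mult_left_mono)

lemma term_compare:
  fixes a b d K C \<rho> :: real
  assumes a: "0 < a" "a < 1" and b: "0 < b" "b < 1" and ab: "a \<noteq> b"
    and d: "0 < d" "d < K" and C: "0 \<le> C" and \<rho>: "0 \<le> \<rho>" "\<rho> < 1" "\<rho> \<le> b*(1-b)*(1-d/K)/2"
  shows "C*(1/(d*DKL a b)) \<le> (1-\<rho>)*(C*(1/(K*DKL (a*d/K) (b*d/K))))"
proof -
  define x where "x = d/K"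
  have K: "0 < K" using d by simp
  have x: "0 < x" "x < 1" using d K unfolding x_def by auto
  have ax: "a*d/K = a*x" "b*d/K = b*x" unfolding x_def by simp_all
  have h: "a*x < a" "b*x < b" using a b x by (simp_all add: mult_less_cancel_left1)
  have ax1: "0 < a*x" "a*x < 1" "0 < b*x" "b*x < 1"
    using a b x apply simp_all using h a b by linarith+
  have axb: "a*x \<noteq> b*x" using ab x by simp
  have Dp: "0 < DKL (a*x) (b*x)" by (rule DKL_pos) (use ax1 axb in auto)
  have D0: "0 < DKL a b" by (rule DKL_pos) (use a b ab in auto)
  have ch: "DKL (a*x) (b*x) \<le> x * DKL a b * (1 - b*(1-b)*(1-x)/2)"
    by (rule chord_DKL) (use a b x in auto)
  also have "\<dots> \<le> x * DKL a b * (1 - \<rho>)"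
  proof -
    have "0 \<le> x * DKL a b" using x D0 by simp
    moreover have "\<rho> \<le> b*(1-b)*(1-x)/2" using \<rho> unfolding x_def by simp
    ultimately show ?thesis by (intro mult_left_mono) auto
  qed
  finally have "K * DKL (a*x) (b*x) \<le> K * (x * DKL a b * (1 - \<rho>))" using K by simp
  also have "K * (x * DKL a b * (1 - \<rho>)) = (d * DKL a b) * (1-\<rho>)" unfolding x_def using K by simp
  finally have Y: "K * DKL (a*x) (b*x) \<le> (d * DKL a b) * (1-\<rho>)" .
  show ?thesis unfolding ax
    by (rule recip_le[OF _ Y]) (use K Dp d D0 \<rho> C in auto)
qed

lemma Ber_cmp:
  assumes p: "(\<alpha>, \<beta>, d) \<in> DD_domain q k" and q: "0 < q" "q < 1"
    and th: "0 < \<theta>" "\<theta> < 1" and \<rho>: "0 \<le> \<rho>" "\<rho> < 1"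
    "\<rho> \<le> q*(1-q)*exp(-real k)*(1-d/real k)/2"
    and l: "0 \<le> l" "l \<le> (1-\<zeta>)/(1-\<theta>)" "l*(1-\<rho>) \<le> 1"
  shows "l * CCobj q \<theta> (\<alpha>, \<beta>, d) \<le> Bobj q \<theta> \<zeta> k (\<alpha>, \<beta>, d)"
proof -
  note df = dom_facts[OF p q]
  define t where "t = (1-q)*exp(-d)"
  define K where "K = real k"
  have t: "0 < t" "t < 1 - q" unfolding t_def using df(3,4) by simp_all
  have d: "0 < d" "d < K" unfolding K_def using df(1,2) by simp_all
  have al: "q < \<alpha>" "\<alpha> < q + t" "0 < \<beta>" "\<beta> < t" unfolding t_def using df(5-8) by simp_all
  have C: "0 \<le> \<theta>/(1-\<theta>)" using th by simp
  have x01: "0 \<le> 1 - d/K" using d by simp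
  have eK: "exp(-K) \<le> 1" using d by simp
  have "q*(1-q)*exp(-K)*(1-d/K)/2 \<le> q*(1-q)*1*(1-d/K)/2"
    using q eK x01 by (intro divide_right_mono mult_right_mono mult_left_mono) auto
  then have \<rho>1: "\<rho> \<le> q*(1-q)*(1-d/K)/2" using \<rho> unfolding K_def by simp
  have tt: "q*(1-q)*exp(-K) \<le> t*(1-t)"
  proof -
    have "exp(-K) \<le> exp(-d)" using d by simp
    then have "(1-q)*exp(-K) \<le> t" unfolding t_def using q by (intro mult_left_mono) auto
    moreover have "q \<le> 1 - t" using t by simp
    ultimately have "(1-q)*exp(-K) * q \<le> t * (1-t)" using q t by (intro mult_mono) auto
    then show ?thesis by (simp add: algebra_simps)
  qed
  have "q*(1-q)*exp(-K)*(1-d/K)/2 \<le> t*(1-t)*(1-d/K)/2"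
    using tt x01 by (intro divide_right_mono mult_right_mono) auto
  then have \<rho>3: "\<rho> \<le> t*(1-t)*(1-d/K)/2" using \<rho> unfolding K_def by simp
  define B1 where "B1 = \<theta>/(1-\<theta>) * (1/(K*DKL (\<alpha>*d/K) (q*d/K)))"
  define B2' where "B2' = 1 * (1/(K*DKL (\<alpha>*d/K) ((q+t)*d/K)))"
  define B3 where "B3 = \<theta>/(1-\<theta>) * (1/(K*DKL (\<beta>*d/K) (t*d/K)))"
  have c1: "\<theta>/(1-\<theta>)*(1/(d*DKL \<alpha> q)) \<le> (1-\<rho>) * B1"
    unfolding B1_def by (rule term_compare) (use al q t d C \<rho> \<rho>1 in auto)
  have c2: "1*(1/(d*DKL \<alpha> (q+t))) \<le> (1-0) * B2'"
    unfolding B2'_def by (rule term_compare) (use al q t d in auto)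
  have c3: "\<theta>/(1-\<theta>)*(1/(d*DKL \<beta> t)) \<le> (1-\<rho>) * B3"
    unfolding B3_def by (rule term_compare) (use al q t d C \<rho> \<rho>3 in linarith)+
  have D1: "0 < DKL \<alpha> q" by (rule DKL_pos) (use al q t in auto)
  have D2: "0 < DKL \<alpha> (q+t)" by (rule DKL_pos) (use al q t in auto)
  have D3: "0 < DKL \<beta> t" by (rule DKL_pos) (use al q t in auto)
  have L1: "0 \<le> \<theta>/(1-\<theta>)*(1/(d*DKL \<alpha> q))" using C d D1 by (intro mult_nonneg_nonneg) auto
  have L2: "0 \<le> 1*(1/(d*DKL \<alpha> (q+t)))" using d D2 by simp
  have L3: "0 \<le> \<theta>/(1-\<theta>)*(1/(d*DKL \<beta> t))" using C d D3 by (intro mult_nonneg_nonneg) auto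
  have r1: "0 < 1 - \<rho>" using \<rho> by simp
  have B1p: "0 \<le> B1" "0 \<le> B3" "0 \<le> B2'"
    using order_trans[OF L1 c1] order_trans[OF L3 c3] order_trans[OF L2 c2] r1
    by (simp_all add: zero_le_mult_iff)
  have "l * (\<theta>/(1-\<theta>)*(1/(d*DKL \<alpha> q))) \<le> l * ((1-\<rho>) * B1)" using c1 l by (intro mult_left_mono) auto
  also have "\<dots> = (l*(1-\<rho>)) * B1" by simp
  also have "\<dots> \<le> 1 * B1" using l B1p by (intro mult_right_mono) auto
  finally have f1: "l * (\<theta>/(1-\<theta>)*(1/(d*DKL \<alpha> q))) \<le> B1" by simp
  have "l * (\<theta>/(1-\<theta>)*(1/(d*DKL \<beta> t))) \<le> l * ((1-\<rho>) * B3)" using c3 l by (intro mult_left_mono) auto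
  also have "\<dots> = (l*(1-\<rho>)) * B3" by simp
  also have "\<dots> \<le> 1 * B3" using l B1p by (intro mult_right_mono) auto
  finally have f3: "l * (\<theta>/(1-\<theta>)*(1/(d*DKL \<beta> t))) \<le> B3" by simp
  have "l * (1/(d*DKL \<alpha> (q+t))) \<le> l * B2'" using c2 l by (intro mult_left_mono) auto
  also have "\<dots> \<le> (1-\<zeta>)/(1-\<theta>) * B2'" using l B1p by (intro mult_right_mono) auto
  finally have f2: "l * (1/(d*DKL \<alpha> (q+t))) \<le> (1-\<zeta>)/(1-\<theta>) * (1/(K*DKL (\<alpha>*d/K) ((q+t)*d/K)))"
    unfolding B2'_def by simp
  have "l * max (\<theta>/(1-\<theta>)*(1/(d*DKL \<alpha> q))) (max (1/(d*DKL \<alpha> (q+t))) (\<theta>/(1-\<theta>)*(1/(d*DKL \<beta> t))))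
    \<le> max B1 (max ((1-\<zeta>)/(1-\<theta>) * (1/(K*DKL (\<alpha>*d/K) ((q+t)*d/K)))) B3)"
    by (rule max3_scale) (use l f1 f2 f3 in auto)
  moreover have "CCobj q \<theta> (\<alpha>, \<beta>, d) = max (\<theta>/(1-\<theta>)*(1/(d*DKL \<alpha> q))) (max (1/(d*DKL \<alpha> (q+t))) (\<theta>/(1-\<theta>)*(1/(d*DKL \<beta> t))))"
    unfolding CCobj_def t_def using df(9) by simp
  moreover have "Bobj q \<theta> \<zeta> k (\<alpha>, \<beta>, d) = max B1 (max ((1-\<zeta>)/(1-\<theta>) * (1/(K*DKL (\<alpha>*d/K) ((q+t)*d/K)))) B3)"
    unfolding Bobj_def B1_def B3_def t_def K_def 
    apply (simp only: prod.case) apply (subst df(10)) apply (subst df(9)) by (rule refl)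
  ultimately show ?thesis by simp
qed

lemma CC_lower:
  assumes p: "(\<alpha>, \<beta>, d) \<in> DD_domain q k" and q: "0 < q" "q < 1"
    and th: "0 < \<theta>" "\<theta> < 1"
  shows "\<theta>/(1-\<theta>) * (q/(real k*(1-q))) \<le> CCobj q \<theta> (\<alpha>, \<beta>, d)"
proof -
  note df = dom_facts[OF p q]
  define t where "t = (1-q)*exp(-d)"
  have t: "0 < t" "t < 1 - q" unfolding t_def using df(3,4) by simp_all
  have d: "0 < d" "d < real k" using df(1,2) by simp_all
  have be: "0 < \<beta>" "\<beta> < t" unfolding t_def using df(7,8) by simp_all
  have D: "0 < DKL \<beta> t" by (rule DKL_pos) (use be t q in auto)
  have "DKL \<beta> t \<le> (\<beta>-t)^2/(t*(1-t))" by (rule chi2) (use be t q in auto)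
  also have "\<dots> \<le> t^2/(t*(1-t))"
  proof -
    have "(t-\<beta>)^2 \<le> t^2" using be by (intro power_mono) auto
    then have "(\<beta>-t)^2 \<le> t^2" by (simp add: power2_commute)
    then show ?thesis using t q by (intro divide_right_mono) auto
  qed
  also have "\<dots> = t/(1-t)" using t by (simp add: power2_eq_square)
  also have "\<dots> \<le> (1-q)/q"
    using t q by (simp add: divide_simps) (simp add: algebra_simps)
  finally have D1: "DKL \<beta> t \<le> (1-q)/q" .
  have "d * DKL \<beta> t \<le> real k * ((1-q)/q)"
    using d D D1 by (intro mult_mono) auto
  then have "q/(real k*(1-q)) \<le> 1/(d * DKL \<beta> t)"
    using d D q by (simp add: divide_simps) (simp add: algebra_simps)
  then have "\<theta>/(1-\<theta>) * (q/(real k*(1-q))) \<le> \<theta>/(1-\<theta>) * (1/(d * DKL \<beta> t))"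
    using th by (intro mult_left_mono) auto
  also have "\<dots> \<le> CCobj q \<theta> (\<alpha>, \<beta>, d)" unfolding CCobj_def t_def by simp
  finally show ?thesis .
qed

lemma step_term:
  fixes D D' c \<epsilon> \<epsilon>i d d' l :: real
  assumes D: "0 < D" and F: "c*D*(1+(c-1)*\<epsilon>i) \<le> D'" and e: "\<epsilon> \<le> \<epsilon>i" "0 \<le> \<epsilon>"
    and c: "1 \<le> c" and d': "0 < d'" and l: "l*d \<le> d'*c*(1+(c-1)*\<epsilon>)"
  shows "l*(d*D) \<le> d'*D'"
proof -
  have "l*(d*D) = (l*d)*D" by simp
  also have "\<dots> \<le> (d'*c*(1+(c-1)*\<epsilon>))*D" using l D by (intro mult_right_mono) auto
  also have "\<dots> = d' * (c*D*(1+(c-1)*\<epsilon>))" by (simp add: algebra_simps)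
  also have "\<dots> \<le> d' * (c*D*(1+(c-1)*\<epsilon>i))"
  proof -
    have "(c-1)*\<epsilon> \<le> (c-1)*\<epsilon>i" using c e by (intro mult_left_mono) auto
    then have "1+(c-1)*\<epsilon> \<le> 1+(c-1)*\<epsilon>i" by simp
    then have "c*D*(1+(c-1)*\<epsilon>) \<le> c*D*(1+(c-1)*\<epsilon>i)" using c D by (intro mult_left_mono) auto
    then show ?thesis by (rule mult_left_mono) (use d' in auto)
  qed
  also have "\<dots> \<le> d' * D'" using F d' by (intro mult_left_mono) auto
  finally show ?thesis .
qed

lemma CC_shift:
  assumes p: "(\<alpha>, \<beta>, d) \<in> DD_domain q k" and q: "0 < q" "q < 1"
    and th: "0 < \<theta>" "\<theta> < 1"
    and dh: "1/2 \<le> d" and \<delta>: "0 < \<delta>" "\<delta> < d"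
    and \<epsilon>: "\<epsilon> = q^3*(1-q)*exp(-real k)/6"
    and lam: "0 < l" "l*d \<le> (d-\<delta>)*exp \<delta>*(1+(exp \<delta> - 1)*\<epsilon>)"
  shows "\<exists>p'\<in>DD_domain q k. l * CCobj q \<theta> p' \<le> CCobj q \<theta> (\<alpha>, \<beta>, d)"
proof -
  note df = dom_facts[OF p q]
  define K where "K = real k"
  define t where "t = (1-q)*exp(-d)"
  define d' where "d' = d - \<delta>"
  define c where "c = exp \<delta>"
  define g where "g = (\<alpha>-q)/t"
  define e where "e = \<beta>/t"
  define \<alpha>' where "\<alpha>' = q + g*(c*t)"
  define \<beta>' where "\<beta>' = e*(c*t)"
  have t: "0 < t" "t < 1 - q" unfolding t_def using df(3,4) by simp_all
  have d: "0 < d" "d < K" unfolding K_def using df(1,2) by simp_all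
  have al: "q < \<alpha>" "\<alpha> < q + t" "0 < \<beta>" "\<beta> < t" unfolding t_def using df(5-8) by simp_all
  have d': "0 < d'" "d' < K" using \<delta> d unfolding d'_def by auto
  have c: "1 \<le> c" using \<delta> unfolding c_def by simp
  have ct: "c*t = (1-q)*exp(-d')" unfolding c_def t_def d'_def by (simp add: exp_diff exp_minus field_simps)
  have ct1: "0 < c*t" "c*t < 1 - q"
  proof -
    show "0 < c*t" using c t by simp
    have "exp(-d') < 1" using d' by simp
    then have "(1-q)*exp(-d') < (1-q)*1" using q by (intro mult_strict_left_mono) auto
    then show "c*t < 1 - q" using ct by simp
  qed
  have g: "0 < g" "g < 1" "\<alpha> = q + g*t" unfolding g_def using al t by (auto simp: field_simps)
  have e: "0 < e" "e < 1" "\<beta> = e*t" unfolding e_def using al t by (auto simp: field_simps)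
  have eu': "exp (- d') + (1 - exp (- d')) * q = q + c*t" using ct by (simp add: algebra_simps)
  have gct: "g*(c*t) < c*t" using mult_strict_right_mono[of g 1 "c*t"] g ct1 by simp
  have ect: "e*(c*t) < c*t" using mult_strict_right_mono[of e 1 "c*t"] e ct1 by simp
  have pd: "(\<alpha>', \<beta>', d') \<in> DD_domain q k"
    unfolding DD_domain_def
  proof (simp, intro conjI)
    show "0 < d'" "d' < real k" using d' K_def by auto
    show "q < \<alpha>'" unfolding \<alpha>'_def using g ct1 by simp
    show "\<alpha>' < exp (- d') + (1 - exp (- d')) * q" unfolding eu' \<alpha>'_def using gct by simp
    show "0 < \<beta>'" unfolding \<beta>'_def using e ct1 by simp
    show "\<beta>' < exp (- d') * (1 - q)" unfolding \<beta>'_def using ect ct by (simp add: mult.commute)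
  qed
  have \<epsilon>0: "0 \<le> \<epsilon>" unfolding \<epsilon> using q by simp
  have eK: "exp(-K) \<le> 1" using d by simp
  have q3: "q^3 \<le> q" using q by (simp add: power_le_one power3_eq_cube mult_le_one)
  have q2: "q^2 \<le> 1" using q by (simp add: power_le_one)
  have F1: "c * DKL \<alpha> q * (1 + (c-1)*(q*(1-q))) \<le> DKL \<alpha>' q"
    unfolding g(3) \<alpha>'_def by (rule F1_scale) (use q g t c ct1 in auto)
  have e1: "\<epsilon> \<le> q*(1-q)"
  proof -
    have "q^3*(1-q)*exp(-K) \<le> q*(1-q)*1" using q3 eK q by (intro mult_mono) auto
    moreover have "0 \<le> q*(1-q)" using q by simp
    ultimately have "q^3*(1-q)*exp(-K)/6 \<le> q*(1-q)" by linarith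
    then show ?thesis unfolding \<epsilon> K_def by simp
  qed
  have w2: "q*(1-q)/3 \<le> (q+t)*(1-(q+t))"
  proof -
    have "3/2 \<le> exp d" using dh exp_ge_add_one_self[of d] by linarith
    then have "exp(-d) \<le> 2/3" by (simp add: exp_minus divide_simps)
    then have "t \<le> (1-q)*(2/3)" unfolding t_def using q by (intro mult_left_mono) auto
    then have "(1-q)/3 \<le> 1-(q+t)" by simp
    moreover have "q \<le> q+t" using t by simp
    ultimately have "q*((1-q)/3) \<le> (q+t)*(1-(q+t))" using q by (intro mult_mono) auto
    then show ?thesis by simp
  qed
  have F2: "c * DKL \<alpha> (q+t) * (1 + (c-1)*(q^2*(q*(1-q)/3)/2)) \<le> DKL \<alpha>' (q+c*t)"
    unfolding g(3) \<alpha>'_def by (rule F2_scale) (use q g t c ct1 w2 in auto)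
  have e2: "\<epsilon> \<le> q^2*(q*(1-q)/3)/2"
  proof -
    have "q^3*(1-q)*exp(-K) \<le> q^3*(1-q)*1" using eK q by (intro mult_left_mono) auto
    then show ?thesis unfolding \<epsilon> K_def by (simp add: power3_eq_cube power2_eq_square)
  qed
  have w3: "q*(1-q)*exp(-K) \<le> t*(1-t)"
  proof -
    have "exp(-K) \<le> exp(-d)" using d by simp
    then have "(1-q)*exp(-K) \<le> t" unfolding t_def using q by (intro mult_left_mono) auto
    moreover have "q \<le> 1 - t" using t by simp
    ultimately have "(1-q)*exp(-K) * q \<le> t * (1-t)" using q t by (intro mult_mono) auto
    then show ?thesis by (simp add: algebra_simps)
  qed
  have F3: "c * DKL \<beta> t * (1 + (c-1)*(q*(1-q)*exp(-K)/2)) \<le> DKL \<beta>' (c*t)"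
    unfolding e(3) \<beta>'_def by (rule F3_scale) (use e t c ct1 w3 q in auto)
  have e3: "\<epsilon> \<le> q*(1-q)*exp(-K)/2"
  proof -
    have "q^3*(1-q)*exp(-K) \<le> q*(1-q)*exp(-K)" using q3 q by (intro mult_right_mono) auto
    moreover have "0 \<le> q*(1-q)*exp(-K)" using q by simp
    ultimately have "q^3*(1-q)*exp(-K)/6 \<le> q*(1-q)*exp(-K)/2" by linarith
    then show ?thesis unfolding \<epsilon> K_def by simp
  qed
  have lam': "l*d \<le> d'*c*(1+(c-1)*\<epsilon>)" using lam unfolding d'_def c_def by simp
  have D1: "0 < DKL \<alpha> q" by (rule DKL_pos) (use al q t in auto)
  have D2: "0 < DKL \<alpha> (q+t)" by (rule DKL_pos) (use al q t in auto)
  have D3: "0 < DKL \<beta> t" by (rule DKL_pos) (use al q t in auto)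
  have s1: "l*(d*DKL \<alpha> q) \<le> d'*DKL \<alpha>' q"
    by (rule step_term[OF D1 F1 e1 \<epsilon>0 c d'(1) lam'])
  have s2: "l*(d*DKL \<alpha> (q+t)) \<le> d'*DKL \<alpha>' (q+c*t)"
    by (rule step_term[OF D2 F2 e2 \<epsilon>0 c d'(1) lam'])
  have s3: "l*(d*DKL \<beta> t) \<le> d'*DKL \<beta>' (c*t)"
    by (rule step_term[OF D3 F3 e3 \<epsilon>0 c d'(1) lam'])
  have C: "0 \<le> \<theta>/(1-\<theta>)" using th by simp
  have "l * max (\<theta>/(1-\<theta>)*(1/(d'*DKL \<alpha>' q))) (max (1*(1/(d'*DKL \<alpha>' (q+c*t)))) (\<theta>/(1-\<theta>)*(1/(d'*DKL \<beta>' (c*t)))))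
     \<le> max (\<theta>/(1-\<theta>)*(1/(d*DKL \<alpha> q))) (max (1*(1/(d*DKL \<alpha> (q+t)))) (\<theta>/(1-\<theta>)*(1/(d*DKL \<beta> t))))"
  proof (rule max3_scale)
    show "0 \<le> l" using lam by simp
    show "l * (\<theta>/(1-\<theta>)*(1/(d'*DKL \<alpha>' q))) \<le> \<theta>/(1-\<theta>)*(1/(d*DKL \<alpha> q))"
      by (rule recip_ge[OF _ s1]) (use d D1 lam C in auto)
    show "l * (1*(1/(d'*DKL \<alpha>' (q+c*t)))) \<le> 1*(1/(d*DKL \<alpha> (q+t)))"
      by (rule recip_ge[OF _ s2]) (use d D2 lam in auto)
    show "l * (\<theta>/(1-\<theta>)*(1/(d'*DKL \<beta>' (c*t)))) \<le> \<theta>/(1-\<theta>)*(1/(d*DKL \<beta> t))"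
      by (rule recip_ge[OF _ s3]) (use d D3 lam C in auto)
  qed
  moreover have "CCobj q \<theta> (\<alpha>', \<beta>', d') = max (\<theta>/(1-\<theta>)*(1/(d'*DKL \<alpha>' q))) (max (1*(1/(d'*DKL \<alpha>' (q+c*t)))) (\<theta>/(1-\<theta>)*(1/(d'*DKL \<beta>' (c*t)))))"
    unfolding CCobj_def using eu' ct by simp
  moreover have "CCobj q \<theta> (\<alpha>, \<beta>, d) = max (\<theta>/(1-\<theta>)*(1/(d*DKL \<alpha> q))) (max (1*(1/(d*DKL \<alpha> (q+t)))) (\<theta>/(1-\<theta>)*(1/(d*DKL \<beta> t))))"
    unfolding CCobj_def t_def using df(9) by simp
  ultimately show ?thesis using pd by metis
qed

lemma dom_nonempty:
  assumes "0 < q" "q < 1" "0 < k"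
  shows "DD_domain q k \<noteq> {}"
proof -
  define d where "d = real k / 2"
  define t where "t = (1-q)*exp(-d)"
  have d: "0 < d" "d < real k" using assms unfolding d_def by auto
  have t: "0 < t" unfolding t_def using assms by simp
  have u: "exp(-d) + (1-exp(-d))*q = q + t" unfolding t_def by (simp add: algebra_simps)
  have v: "exp(-d)*(1-q) = t" unfolding t_def by simp
  have "(q + t/2, t/2, d) \<in> DD_domain q k"
    unfolding DD_domain_def mem_Collect_eq prod.case u v using d t by auto
  then show ?thesis by blast
qed

lemma lam2_ineq:
  fixes \<epsilon> K d :: real
  assumes e: "0 < \<epsilon>" and K: "1 \<le> K"
    and d: "K*(2+\<epsilon>)/(2+2*\<epsilon>) < d"
  shows "(1 - \<epsilon>/(4+2*\<epsilon>))*(1+\<epsilon>/4) * d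
     \<le> (d - \<epsilon>/(4+2*\<epsilon>)*(K*(2+\<epsilon>)/(2+2*\<epsilon>))) * exp (\<epsilon>/(4+2*\<epsilon>)*(K*(2+\<epsilon>)/(2+2*\<epsilon>)))
       * (1 + (exp (\<epsilon>/(4+2*\<epsilon>)*(K*(2+\<epsilon>)/(2+2*\<epsilon>))) - 1)*\<epsilon>)"
proof -
  define a where "a = \<epsilon>/(4+2*\<epsilon>)"
  define d1 where "d1 = K*(2+\<epsilon>)/(2+2*\<epsilon>)"
  define \<delta> where "\<delta> = a*d1"
  have a: "0 < a" "a < 1" unfolding a_def using e by (auto simp: field_simps)
  have d1: "0 < d1" unfolding d1_def using e K by simp
  have dd: "d1 < d" using d unfolding d1_def by simp
  have \<delta>0: "0 \<le> \<delta>" unfolding \<delta>_def using a d1 by simp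
  have key: "(1+\<epsilon>)*\<delta> = \<epsilon>*K/4" unfolding \<delta>_def a_def d1_def
  proof -
    have "\<epsilon>/(4+2*\<epsilon>) * (K*(2+\<epsilon>)/(2+2*\<epsilon>)) = (\<epsilon>*K) * ((2+\<epsilon>)/((4+2*\<epsilon>)*(2+2*\<epsilon>)))" by (simp add: field_simps)
    also have "(2+\<epsilon>)/((4+2*\<epsilon>)*(2+2*\<epsilon>)) = 1/(4*(1+\<epsilon>))"
    proof -
      have "(4+2*\<epsilon>)*(2+2*\<epsilon>) = (2+\<epsilon>)*(4*(1+\<epsilon>))" by (simp add: algebra_simps)
      moreover have "(2+\<epsilon>) \<noteq> 0" using e by simp
      ultimately show ?thesis by simp
    qed
    finally show "(1+\<epsilon>)*(\<epsilon>/(4+2*\<epsilon>) * (K*(2+\<epsilon>)/(2+2*\<epsilon>))) = \<epsilon>*K/4" using e by (simp add: field_simps)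
  qed
  have E: "1 + \<delta> \<le> exp \<delta>" by simp
  have "(1+\<delta>)*(1+\<delta>*\<epsilon>) \<le> exp \<delta> * (1 + (exp \<delta> - 1)*\<epsilon>)"
  proof -
    have E': "\<delta> \<le> exp \<delta> - 1" using E by linarith
    have "\<delta>*\<epsilon> \<le> (exp \<delta> - 1)*\<epsilon>" using E' e by (intro mult_right_mono) auto
    then have X: "1+\<delta>*\<epsilon> \<le> 1 + (exp \<delta> - 1)*\<epsilon>" by simp
    show ?thesis by (rule mult_mono[OF E X]) (use \<delta>0 e in auto)
  qed
  moreover have "1 + (1+\<epsilon>)*\<delta> \<le> (1+\<delta>)*(1+\<delta>*\<epsilon>)"
    using \<delta>0 e by (simp add: algebra_simps)
  ultimately have G: "1 + \<epsilon>*K/4 \<le> exp \<delta> * (1 + (exp \<delta> - 1)*\<epsilon>)" using key by simp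
  have "1 + \<epsilon>/4 \<le> 1 + \<epsilon>*K/4" using e K by simp
  with G have G2: "1 + \<epsilon>/4 \<le> exp \<delta> * (1 + (exp \<delta> - 1)*\<epsilon>)" by linarith
  have dl: "(1-a)*d \<le> d - \<delta>"
  proof -
    have "a*d1 \<le> a*d" using a dd by simp
    then show ?thesis unfolding \<delta>_def by (simp add: algebra_simps)
  qed
  have "(1-a)*(1+\<epsilon>/4)*d = ((1-a)*d)*(1+\<epsilon>/4)" by simp
  also have "\<dots> \<le> (d-\<delta>)*(exp \<delta> * (1 + (exp \<delta> - 1)*\<epsilon>))"
  proof -
    have "0 \<le> (1-a)*d" using a d1 dd by simp
    then show ?thesis using dl G2 e by (intro mult_mono) auto
  qed
  finally show ?thesis unfolding a_def[symmetric] d1_def[symmetric] \<delta>_def[symmetric] by (simp add: mult.assoc)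
qed

theorem proposition2p16:
  fixes q \<theta> \<zeta> :: real and k n :: nat
  assumes "0 < q" "q < 1" "0 < \<theta>" "\<theta> < 1" "0 < \<zeta>" "\<zeta> < \<theta>"
    and "0 < k" "k < n"
  shows "m_DD_Ber q \<theta> \<zeta> k n > m_DD q \<theta> k n"
proof -
  have q: "0 < q" "q < 1" and th: "0 < \<theta>" "\<theta> < 1" using assms by auto
  define K where "K = real k"
  have K: "1 \<le> K" unfolding K_def using assms by simp
  define \<epsilon> where "\<epsilon> = q^3*(1-q)*exp(-real k)/6"
  have e: "0 < \<epsilon>" unfolding \<epsilon>_def using q by simp
  define a where "a = \<epsilon>/(4+2*\<epsilon>)"
  define d1 where "d1 = K*(2+\<epsilon>)/(2+2*\<epsilon>)"
  define \<delta> where "\<delta> = a*d1"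
  define lam2 where "lam2 = (1-a)*(1+\<epsilon>/4)"
  define \<rho> where "\<rho> = q*(1-q)*exp(-K)*(1 - (2+\<epsilon>)/(2+2*\<epsilon>))/2"
  define cc where "cc = (1-\<zeta>)/(1-\<theta>)"
  define lam1 where "lam1 = min cc (1/(1-\<rho>))"
  define lam where "lam = min lam1 lam2"
  have a: "0 < a" "a < 1" unfolding a_def using e by (auto simp: field_simps)
  have d1: "0 < d1" "d1 < K" "1/2 \<le> d1" unfolding d1_def
  proof -
    have p: "0 < 2+2*\<epsilon>" using e by simp
    show "0 < K*(2+\<epsilon>)/(2+2*\<epsilon>)" using e K by simp
    have "K*(2+\<epsilon>) < K*(2+2*\<epsilon>)" using e K by simp
    then show "K*(2+\<epsilon>)/(2+2*\<epsilon>) < K" using p by (simp add: divide_less_eq)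
    have "1*(2+2*\<epsilon>) \<le> 2*(K*(2+\<epsilon>))"
    proof -
      have "2 + \<epsilon> \<le> K*(2+\<epsilon>)" using K e by simp
      then show ?thesis by simp
    qed
    then show "1/2 \<le> K*(2+\<epsilon>)/(2+2*\<epsilon>)" using p by (simp add: divide_simps)
  qed
  have lam2: "1 < lam2"
  proof -
    have "lam2 = 1 + \<epsilon>^2/(16+8*\<epsilon>)" unfolding lam2_def a_def using e
      by (simp add: field_simps power2_eq_square)
    then show ?thesis using e by simp
  qed
  have x1: "0 < 1 - (2+\<epsilon>)/(2+2*\<epsilon>)" "1 - (2+\<epsilon>)/(2+2*\<epsilon>) \<le> 1" using e by (auto simp: field_simps)
  have eK: "0 < exp(-K)" "exp(-K) \<le> 1" using K by auto
  have qq: "0 < q*(1-q)" "q*(1-q) \<le> 1" using q by (auto simp: mult_le_one)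
  have \<rho>: "0 < \<rho>" "\<rho> < 1" unfolding \<rho>_def
  proof -
    show "0 < q*(1-q)*exp(-K)*(1 - (2+\<epsilon>)/(2+2*\<epsilon>))/2" using qq eK x1 by simp
    have "q*(1-q)*exp(-K)*(1 - (2+\<epsilon>)/(2+2*\<epsilon>)) \<le> 1"
      using qq eK x1 q by (intro mult_le_one) auto
    then show "q*(1-q)*exp(-K)*(1 - (2+\<epsilon>)/(2+2*\<epsilon>))/2 < 1" by simp
  qed
  have cc: "1 < cc" unfolding cc_def using assms by (simp add: field_simps)
  have lam1: "1 < lam1" unfolding lam1_def using cc \<rho> by (simp add: field_simps)
  have lam: "1 < lam" "lam \<le> lam1" "lam \<le> lam2" unfolding lam_def using lam1 lam2 by auto
  define IC where "IC = (INF p \<in> DD_domain q k. CCobj q \<theta> p)"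
  define IB where "IB = (INF p \<in> DD_domain q k. Bobj q \<theta> \<zeta> k p)"
  define Lb where "Lb = \<theta>/(1-\<theta>) * (q/(real k*(1-q)))"
  have Lb: "0 < Lb" unfolding Lb_def using assms by simp
  have ne: "DD_domain q k \<noteq> {}" using dom_nonempty assms by simp
  have lowC: "Lb \<le> CCobj q \<theta> p" if "p \<in> DD_domain q k" for p
    using that CC_lower[OF _ q th] unfolding Lb_def by (cases p) auto
  have bdd: "bdd_below (CCobj q \<theta> ` DD_domain q k)"
    using lowC by (intro bdd_belowI2) auto
  have ICl: "IC \<le> CCobj q \<theta> p" if "p \<in> DD_domain q k" for p
    unfolding IC_def by (rule cINF_lower[OF bdd that])
  have ICp: "Lb \<le> IC" unfolding IC_def by (rule cINF_greatest[OF ne lowC])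
  have main: "lam * IC \<le> Bobj q \<theta> \<zeta> k p" if pin: "p \<in> DD_domain q k" for p
  proof -
    obtain \<alpha> \<beta> d where p: "p = (\<alpha>, \<beta>, d)" by (cases p) auto
    have pd: "(\<alpha>, \<beta>, d) \<in> DD_domain q k" using pin p by simp
    note df = dom_facts[OF pd q]
    have IC0: "0 \<le> IC" using ICp Lb by simp
    have dk: "d/real k \<le> 1" using df(1,2) by simp
    have nn: "0 \<le> q*(1-q)*exp(-real k)*(1-d/real k)" using q dk by (intro mult_nonneg_nonneg) auto
    have base: "CCobj q \<theta> (\<alpha>, \<beta>, d) \<le> Bobj q \<theta> \<zeta> k (\<alpha>, \<beta>, d)"
      using Ber_cmp[OF pd q th, of 0 1 \<zeta>] cc nn unfolding cc_def by simp
    show ?thesis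
    proof (cases "d \<le> d1")
      case True
      have "d/K \<le> d1/K" using True K by (intro divide_right_mono) auto
      moreover have "d1/K = (2+\<epsilon>)/(2+2*\<epsilon>)" unfolding d1_def using K by simp
      ultimately have "d/K \<le> (2+\<epsilon>)/(2+2*\<epsilon>)" by simp
      then have "1 - (2+\<epsilon>)/(2+2*\<epsilon>) \<le> 1 - d/K" by simp
      then have r: "\<rho> \<le> q*(1-q)*exp(-real k)*(1-d/real k)/2"
        unfolding \<rho>_def K_def[symmetric] using qq eK
        by (intro divide_right_mono mult_left_mono) auto
      have l1: "0 \<le> lam1" "lam1 \<le> (1-\<zeta>)/(1-\<theta>)" "lam1*(1-\<rho>) \<le> 1"
      proof -
        show "0 \<le> lam1" using lam1 by simp
        show "lam1 \<le> (1-\<zeta>)/(1-\<theta>)" unfolding lam1_def cc_def by simp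
        have "lam1 \<le> 1/(1-\<rho>)" unfolding lam1_def by simp
        then have "lam1*(1-\<rho>) \<le> 1/(1-\<rho>)*(1-\<rho>)" using \<rho> by (intro mult_right_mono) auto
        then show "lam1*(1-\<rho>) \<le> 1" using \<rho> by simp
      qed
      have B: "lam1 * CCobj q \<theta> (\<alpha>, \<beta>, d) \<le> Bobj q \<theta> \<zeta> k (\<alpha>, \<beta>, d)"
        by (rule Ber_cmp[OF pd q th]) (use \<rho> r l1 in auto)
      have "lam * IC \<le> lam1 * IC" using lam IC0 by (intro mult_right_mono) auto
      also have "\<dots> \<le> lam1 * CCobj q \<theta> (\<alpha>, \<beta>, d)" using ICl[OF pd] l1 by (intro mult_left_mono) auto
      finally show ?thesis using B p by simp
    next
      case False
      then have dd: "d1 < d" by simp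
      have ex: "\<exists>p'\<in>DD_domain q k. lam2 * CCobj q \<theta> p' \<le> CCobj q \<theta> (\<alpha>, \<beta>, d)"
      proof (rule CC_shift[OF pd q th])
        show "1/2 \<le> d" using d1 dd by simp
        show "0 < \<delta>" unfolding \<delta>_def using a d1 by simp
        have "\<delta> < d1" unfolding \<delta>_def using a d1 by simp
        then show "\<delta> < d" using dd by simp
        show "\<epsilon> = q^3*(1-q)*exp(-real k)/6" by (simp add: \<epsilon>_def)
        show "0 < lam2" using lam2 by simp
        show "lam2 * d \<le> (d - \<delta>) * exp \<delta> * (1 + (exp \<delta> - 1) * \<epsilon>)"
          unfolding lam2_def \<delta>_def a_def d1_def
          by (rule lam2_ineq[OF e K]) (use dd in \<open>simp add: d1_def\<close>)
      qed
      then obtain p' where p': "p' \<in> DD_domain q k" "lam2 * CCobj q \<theta> p' \<le> CCobj q \<theta> (\<alpha>, \<beta>, d)" by blast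
      have "lam * IC \<le> lam2 * IC" using lam IC0 by (intro mult_right_mono) auto
      also have "\<dots> \<le> lam2 * CCobj q \<theta> p'" using ICl[OF p'(1)] lam2 by (intro mult_left_mono) auto
      also have "\<dots> \<le> CCobj q \<theta> (\<alpha>, \<beta>, d)" by (fact p'(2))
      also have "\<dots> \<le> Bobj q \<theta> \<zeta> k (\<alpha>, \<beta>, d)" by (fact base)
      finally show ?thesis using p by simp
    qed
  qed
  have IB: "lam * IC \<le> IB" unfolding IB_def by (rule cINF_greatest[OF ne main])
  have "IC < lam * IC" using lam ICp Lb by simp
  then have lt: "IC < IB" using IB by simp
  have kn: "0 < real k * ln (real n / real k)" using assms by simp
  have "IC * (real k * ln (real n / real k)) < IB * (real k * ln (real n / real k))"
    using lt kn by (rule mult_strict_right_mono)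
  then show ?thesis unfolding m_DD_eq m_DD_Ber_eq IC_def[symmetric] IB_def[symmetric]
    by (simp add: mult.assoc)
qed


end
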